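(* Let $K,M$ be symmetric homogeneous stable means and $N$ a symmetric homogeneous mean, all three having symmetric asymptotic expansions with coefficients $(a^K_n),(a^M_n),(a^N_n)$. If $N$ is simultaneously $(K,M)$-stabilizable and $(M,K)$-stabilizable, then $a^K_n=a^M_n$ for all $n\in\mathbb N_0$ and $a^N_1=a^M_1=a^K_1$; moreover $a^N_2=\frac16a^N_1(1+a^N_1)(1-4a^N_1)$.
   Context: A bi-variate mean is $M:(0,\infty)^2\to(0,\infty)$ with $\min\le M\le\max$; symmetric and homogeneous (degree 1). $M$ is stable if $M(s,t)=M\big(M(s,M(s,t)),M(M(s,t),t)\big)$. For stable means $K,M$, $N$ is $(K,M)$-stabilizable if $N(s,t)=K\big(N(s,M(s,t)),N(M(s,t),t)\big)$ for all $s,t>0$. A mean has a symmetric asymptotic expansion with coefficients $(a_n)$ if for every fixed real $t$ and $N\ge0$, $M(x-t,x+t)=\sum_{n=0}^Na_nt^{2n}x^{-2n+1}+o(x^{-2N+1})$ as $x\to\infty$. *)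

theory Defs
  imports "HOL-Analysis.Analysis" "HOL-Library.Landau_Symbols"
begin

text \<open>A bivariate mean on the positive reals. Values outside (0,inf)^2 are irrelevant.\<close>
definition is_mean :: "(real \<Rightarrow> real \<Rightarrow> real) \<Rightarrow> bool" where
  "is_mean M \<longleftrightarrow> (\<forall>s>0. \<forall>t>0. min s t \<le> M s t \<and> M s t \<le> max s t)"

definition symmetric_mean :: "(real \<Rightarrow> real \<Rightarrow> real) \<Rightarrow> bool" where
  "symmetric_mean M \<longleftrightarrow> (\<forall>s>0. \<forall>t>0. M s t = M t s)"

definition homogeneous_mean :: "(real \<Rightarrow> real \<Rightarrow> real) \<Rightarrow> bool" where
  "homogeneous_mean M \<longleftrightarrow> (\<forall>c>0. \<forall>s>0. \<forall>t>0. M (c * s) (c * t) = c * M s t)"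

definition stable_mean :: "(real \<Rightarrow> real \<Rightarrow> real) \<Rightarrow> bool" where
  "stable_mean M \<longleftrightarrow> (\<forall>s>0. \<forall>t>0. M s t = M (M s (M s t)) (M (M s t) t))"

definition stabilizable :: "(real \<Rightarrow> real \<Rightarrow> real) \<Rightarrow> (real \<Rightarrow> real \<Rightarrow> real) \<Rightarrow>
    (real \<Rightarrow> real \<Rightarrow> real) \<Rightarrow> bool" where
  "stabilizable K M N \<longleftrightarrow> (\<forall>s>0. \<forall>t>0. N s t = K (N s (M s t)) (N (M s t) t))"

definition sym_asymp_expansion :: "(real \<Rightarrow> real \<Rightarrow> real) \<Rightarrow> (nat \<Rightarrow> real) \<Rightarrow> bool" where
  "sym_asymp_expansion M a \<longleftrightarrow>
     (\<forall>t::real. \<forall>N::nat.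
        (\<lambda>x. M (x - t) (x + t) - (\<Sum>n\<le>N. a n * t ^ (2 * n) * x powr (1 - 2 * real n)))
          \<in> o[at_top](\<lambda>x. x powr (1 - 2 * real N)))"

end

theory Submission
  imports Defs
begin

lemma powr_aux: "r > 0 \<Longrightarrow> (1/r) powr (1 - 2 * real n) = r^(2*n) / (r::real)"
proof -
  assume r: "r > 0"
  have "(1/r) powr (1 - 2 * real n) = r powr (2 * real n - 1)"
    using r by (simp add: powr_divide powr_minus_divide powr_diff divide_simps)
  also have "\<dots> = r powr (real (2*n)) / r" using r by (simp add: powr_diff)
  also have "\<dots> = r^(2*n) / r" using r by (subst powr_realpow[symmetric]) auto
  finally show ?thesis .
qed

lemma mean_phi:
  assumes "homogeneous_mean X" "p > 0" "q > 0"
  shows "X p q = (p+q)/2 * X (1 - (q-p)/(q+p)) (1 + (q-p)/(q+p))"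
proof -
  have e1: "1 - (q-p)/(q+p) = 2*p/(p+q)" "1 + (q-p)/(q+p) = 2*q/(p+q)" using assms by (auto simp: field_simps)
  have a: "(p+q)/2 * (2*p/(p+q)) = p" "(p+q)/2 * (2*q/(p+q)) = q" using assms by (auto simp: field_simps)
  have "X p q = X ((p+q)/2 * (2*p/(p+q))) ((p+q)/2 * (2*q/(p+q)))" unfolding a ..
  also have "\<dots> = (p+q)/2 * X (2*p/(p+q)) (2*q/(p+q))"
  proof -
    have "(p+q)/2 > 0" "2*p/(p+q) > 0" "2*q/(p+q) > 0" using assms by auto
    then show ?thesis using assms(1) unfolding homogeneous_mean_def by blast
  qed
  finally show ?thesis using e1 by simp
qed


definition phi :: "(real \<Rightarrow> real \<Rightarrow> real) \<Rightarrow> real \<Rightarrow> real" where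
  "phi X r = X (1 - r) (1 + r)"

lemma ev01: "eventually (\<lambda>r::real. 0 < r \<and> r < 1) (at_right 0)"
  using eventually_at_right_real[of 0 1] by (auto elim: eventually_mono)

lemma expansion_r:
  assumes hom: "homogeneous_mean X" and ex: "sym_asymp_expansion X a"
  shows "(\<lambda>r. phi X r - (\<Sum>n\<le>k. a n * r^(2*n))) \<in> o[at_right 0](\<lambda>r. r^(2*k))"
proof -
  let ?f = "\<lambda>x. X (x - 1) (x + 1) - (\<Sum>n\<le>k. a n * 1 ^ (2 * n) * x powr (1 - 2 * real n))"
  have f: "?f \<in> o[at_top](\<lambda>x. x powr (1 - 2 * real k))"
    using ex unfolding sym_asymp_expansion_def by blast
  have g: "(\<lambda>r. ?f (inverse r)) \<in> o[at_right 0](\<lambda>r. (inverse r) powr (1 - 2 * real k))"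
    by (rule landau_o.small.compose[OF f filterlim_inverse_at_top_right])
  have h: "(\<lambda>r. r * ?f (inverse r)) \<in> o[at_right 0](\<lambda>r. r * (inverse r) powr (1 - 2 * real k))"
    by (rule landau_o.small.mult_left[OF g])
  show ?thesis
  proof (rule landau_o.small.cong_ex[THEN iffD1, OF _ _ h])
    show "\<forall>\<^sub>F r in at_right 0. r * ?f (inverse r) = phi X r - (\<Sum>n\<le>k. a n * r^(2*n))"
      using ev01
    proof eventually_elim
      case (elim r)
      have hx: "X (inverse r - 1) (inverse r + 1) = inverse r * phi X r"
      proof -
        have "X (inverse r - 1) (inverse r + 1) = X (inverse r * (1 - r)) (inverse r * (1 + r))"
          using elim by (simp add: field_simps)
        also have "\<dots> = inverse r * phi X r" unfolding phi_def
          using hom elim unfolding homogeneous_mean_def by auto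
        finally show ?thesis .
      qed
      have hs: "(\<Sum>n\<le>k. a n * 1 ^ (2 * n) * inverse r powr (1 - 2 * real n)) = inverse r * (\<Sum>n\<le>k. a n * r^(2*n))"
      proof -
        have e: "\<And>n. a n * 1 ^ (2 * n) * inverse r powr (1 - 2 * real n) = inverse r * (a n * r^(2*n))"
          using elim powr_aux[of r] by (simp add: field_simps)
        show ?thesis unfolding sum_distrib_left by (rule sum.cong[OF refl e])
      qed
      have "r * inverse r = 1" using elim by simp
      then show ?case using hx hs by (simp add: right_diff_distrib mult.assoc[symmetric])
    qed
    show "\<forall>\<^sub>F r in at_right 0. r * (inverse r) powr (1 - 2 * real k) = r^(2*k)"
      using ev01 by eventually_elim (use powr_aux in \<open>auto simp: divide_inverse\<close>)
  qed
qed


abbreviation "R0 \<equiv> at_right (0::real)"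

lemma tendsto_fun_eq: "(f \<longlongrightarrow> l) F \<Longrightarrow> (\<And>x. f x = g x) \<Longrightarrow> l = l' \<Longrightarrow> (g \<longlongrightarrow> l') F"
  by (metis ext)

lemma small_of_tendsto0: "(h \<longlongrightarrow> 0) F \<Longrightarrow> f \<in> O[F](g) \<Longrightarrow> (\<lambda>x. h x * f x) \<in> o[F](g)"
  for h f g :: "'a \<Rightarrow> real"
proof -
  assume h: "(h \<longlongrightarrow> 0) F" and f: "f \<in> O[F](g)"
  have "h \<in> o[F](\<lambda>_. 1)" by (rule smalloI_tendsto) (use h in auto)
  from landau_o.small_big_mult[OF this f] show ?thesis by simp
qed

lemma big1_of_tendsto: "(h \<longlongrightarrow> c) F \<Longrightarrow> h \<in> O[F](\<lambda>_. 1::real)"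
  for h :: "'a \<Rightarrow> real"
  by (rule bigoI_tendsto[where c=c]) auto

lemma tendsto0_of_small1: "f \<in> o[F](\<lambda>_. 1::real) \<Longrightarrow> (f \<longlongrightarrow> 0) F"
  for f :: "'a \<Rightarrow> real"
  using smalloD_tendsto[of f F "\<lambda>_. 1"] by simp

lemma ev_pos: "eventually (\<lambda>r::real. r > 0) R0"
  using ev01 by (auto elim: eventually_mono)

lemma pow_small_r: "n \<ge> 1 \<Longrightarrow> (\<lambda>r::real. r^(2*n)) \<in> o[R0](\<lambda>r. r)"
proof -
  assume n: "n \<ge> 1"
  have "((\<lambda>r::real. r^(2*n-1)) \<longlongrightarrow> 0^(2*n-1)) R0"
    by (intro tendsto_intros)
  moreover have "(0::real)^(2*n-1) = 0" using n by simp
  ultimately have t: "((\<lambda>r::real. r^(2*n-1)) \<longlongrightarrow> 0) R0" by simp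
  show ?thesis
  proof (rule smalloI_tendsto)
    show "((\<lambda>r::real. r^(2*n) / r) \<longlongrightarrow> 0) R0"
    proof (rule Lim_transform_eventually[OF t])
      show "\<forall>\<^sub>F r in R0. r ^ (2 * n - 1) = r ^ (2 * n) / r"
        using ev_pos
      proof eventually_elim
        case (elim r)
        have "r^(2*n) = r^(2*n-1) * r" using n by (metis Suc_diff_1 mult_pos_pos pos2 less_le_trans zero_less_one power_Suc2 le_simps(3) nat_mult_1_right mult_le_mono2 mult_2 One_nat_def)
        then show ?case using elim by simp
      qed
    qed
    show "\<forall>\<^sub>F x in R0. x \<noteq> 0" using ev_pos by (auto elim: eventually_mono)
  qed
qed

lemma pow_tendsto0: "n \<ge> 1 \<Longrightarrow> ((\<lambda>r::real. r^(2*n)) \<longlongrightarrow> 0) R0"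
proof -
  assume "n \<ge> 1"
  have "((\<lambda>r::real. r^(2*n)) \<longlongrightarrow> 0^(2*n)) R0" by (intro tendsto_intros)
  then show ?thesis using \<open>n \<ge> 1\<close> by simp
qed

lemma r_tendsto0: "((\<lambda>r::real. r) \<longlongrightarrow> 0) R0"
  by (simp add: tendsto_ident_at)

lemma wlemma:
  fixes P Q :: "real \<Rightarrow> real"
  assumes c: "((\<lambda>r. (P r + Q r)/2) \<longlongrightarrow> 1) R0"
      and d: "((\<lambda>r. (Q r - P r)/r) \<longlongrightarrow> 1) R0"
  shows "((\<lambda>r. ((Q r - P r)/(Q r + P r))/r) \<longlongrightarrow> 1/2) R0"
    and "filterlim (\<lambda>r. (Q r - P r)/(Q r + P r)) R0 R0"
    and "(\<lambda>r. (Q r - P r)/(Q r + P r)) \<in> O[R0](\<lambda>r. r)"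
    and "eventually (\<lambda>r. P r > 0 \<and> Q r > 0) R0"
    and "(P \<longlongrightarrow> 1) R0" "(Q \<longlongrightarrow> 1) R0"
    and "((\<lambda>r. (Q r - P r)/(Q r + P r)) \<longlongrightarrow> 0) R0"
proof -
  have s: "((\<lambda>r. Q r + P r) \<longlongrightarrow> 2) R0"
  proof -
    have "((\<lambda>r. (P r + Q r)/2 * 2) \<longlongrightarrow> 1 * 2) R0" by (intro tendsto_mult c tendsto_const)
    moreover have "(\<lambda>r. (P r + Q r)/2 * 2) = (\<lambda>r. Q r + P r)" by (auto simp: fun_eq_iff)
    ultimately show ?thesis by simp
  qed
  have dd: "((\<lambda>r. (Q r - P r)) \<longlongrightarrow> 0) R0"
  proof -
    have "((\<lambda>r. r * ((Q r - P r)/r)) \<longlongrightarrow> 0) R0"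
      using tendsto_mult[OF r_tendsto0 d] by simp
    then show ?thesis
      by (rule Lim_transform_eventually) (use ev_pos in \<open>eventually_elim, simp\<close>)
  qed
  have tP: "((\<lambda>r. ((Q r + P r) - (Q r - P r))/2) \<longlongrightarrow> (2 - 0)/2) R0"
    by (intro tendsto_intros s dd) auto
  then show P1: "(P \<longlongrightarrow> 1) R0" by simp
  have tQ: "((\<lambda>r. ((Q r + P r) + (Q r - P r))/2) \<longlongrightarrow> (2 + 0)/2) R0"
    by (intro tendsto_intros s dd) auto
  then show Q1: "(Q \<longlongrightarrow> 1) R0" by simp
  show "eventually (\<lambda>r. P r > 0 \<and> Q r > 0) R0"
    using order_tendstoD(1)[OF P1, of 0] order_tendstoD(1)[OF Q1, of 0]
    by (auto elim: eventually_elim2)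
  have wr: "((\<lambda>r. ((Q r - P r)/r) / (Q r + P r)) \<longlongrightarrow> 1/2) R0"
    using tendsto_divide[OF d s] by simp
  then show wr': "((\<lambda>r. ((Q r - P r)/(Q r + P r))/r) \<longlongrightarrow> 1/2) R0"
    by (simp add: field_simps)
  show w0: "((\<lambda>r. (Q r - P r)/(Q r + P r)) \<longlongrightarrow> 0) R0"
    using tendsto_divide[OF dd s] by simp
  show "(\<lambda>r. (Q r - P r)/(Q r + P r)) \<in> O[R0](\<lambda>r. r)"
    by (rule bigoI_tendsto[OF wr']) (use ev_pos in \<open>auto elim: eventually_mono\<close>)
  have "eventually (\<lambda>r. ((Q r - P r)/(Q r + P r))/r > 0) R0"
    using order_tendstoD(1)[OF wr', of 0] by simp
  then have "eventually (\<lambda>r. (Q r - P r)/(Q r + P r) > 0) R0"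
    using ev_pos by eventually_elim (auto simp: zero_less_divide_iff zero_less_mult_iff mult_less_0_iff)
  then show "filterlim (\<lambda>r. (Q r - P r)/(Q r + P r)) R0 R0"
    by (rule tendsto_imp_filterlim_at_right[OF w0])
qed

lemma wlemma2:
  fixes P Q P' Q' :: "real \<Rightarrow> real"
  assumes n: "n \<ge> 1"
      and c: "((\<lambda>r. (P r + Q r)/2) \<longlongrightarrow> 1) R0"
      and d: "((\<lambda>r. (Q r - P r)/r) \<longlongrightarrow> 1) R0"
      and dP: "(\<lambda>r. P' r - P r) \<in> O[R0](\<lambda>r. r^(2*n))"
      and dQ: "(\<lambda>r. Q' r - Q r) \<in> O[R0](\<lambda>r. r^(2*n))"
  shows "((\<lambda>r. (P' r + Q' r)/2) \<longlongrightarrow> 1) R0"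
    and "((\<lambda>r. (Q' r - P' r)/r) \<longlongrightarrow> 1) R0"
proof -
  have sP: "(\<lambda>r. P' r - P r) \<in> o[R0](\<lambda>r. r)"
    using landau_o.big_small_trans[OF dP pow_small_r[OF n]] .
  have sQ: "(\<lambda>r. Q' r - Q r) \<in> o[R0](\<lambda>r. r)"
    using landau_o.big_small_trans[OF dQ pow_small_r[OF n]] .
  have tP: "((\<lambda>r. (P' r - P r)/r) \<longlongrightarrow> 0) R0" using smalloD_tendsto[OF sP] .
  have tQ: "((\<lambda>r. (Q' r - Q r)/r) \<longlongrightarrow> 0) R0" using smalloD_tendsto[OF sQ] .
  have tP0: "((\<lambda>r. P' r - P r) \<longlongrightarrow> 0) R0"
  proof -
    have "((\<lambda>r. r * ((P' r - P r)/r)) \<longlongrightarrow> 0) R0" using tendsto_mult[OF r_tendsto0 tP] by simp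
    then show ?thesis by (rule Lim_transform_eventually) (use ev_pos in \<open>eventually_elim, simp\<close>)
  qed
  have tQ0: "((\<lambda>r. Q' r - Q r) \<longlongrightarrow> 0) R0"
  proof -
    have "((\<lambda>r. r * ((Q' r - Q r)/r)) \<longlongrightarrow> 0) R0" using tendsto_mult[OF r_tendsto0 tQ] by simp
    then show ?thesis by (rule Lim_transform_eventually) (use ev_pos in \<open>eventually_elim, simp\<close>)
  qed
  have "((\<lambda>r. (P r + Q r)/2 + ((P' r - P r) + (Q' r - Q r))/2) \<longlongrightarrow> 1 + (0 + 0)/2) R0"
    by (intro tendsto_intros c tP0 tQ0) auto
  then show "((\<lambda>r. (P' r + Q' r)/2) \<longlongrightarrow> 1) R0" by (rule tendsto_fun_eq) (simp_all add: field_simps)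
  have "((\<lambda>r. (Q r - P r)/r + ((Q' r - Q r)/r - (P' r - P r)/r)) \<longlongrightarrow> 1 + (0 - 0)) R0"
    by (intro tendsto_intros d tP tQ)
  then show "((\<lambda>r. (Q' r - P' r)/r) \<longlongrightarrow> 1) R0" by (rule tendsto_fun_eq) (simp_all add: field_simps diff_divide_distrib)
qed


lemma zero_small: "(\<lambda>_. 0::real) \<in> o[F](g)"
  by (rule landau_o.smallI) auto

lemma S_tendsto0:
  assumes "((w::real\<Rightarrow>real) \<longlongrightarrow> 0) R0" "(w' \<longlongrightarrow> 0) R0" "l \<ge> 1"
  shows "((\<lambda>r. \<Sum>p<Suc (2*l-1). w r ^ p * w' r ^ (2*l-1-p)) \<longlongrightarrow> 0) R0"
proof -
  have "((\<lambda>r. \<Sum>p<Suc (2*l-1). w r ^ p * w' r ^ (2*l-1-p)) \<longlongrightarrow> (\<Sum>p<Suc (2*l-1). 0 ^ p * 0 ^ (2*l-1-p))) R0"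
    by (intro tendsto_intros assms)
  moreover have "(\<Sum>p<Suc (2*l-1). (0::real) ^ p * 0 ^ (2*l-1-p)) = 0"
  proof (intro sum.neutral ballI)
    fix p assume "p \<in> {..<Suc (2*l-1)}"
    then have "p \<noteq> 0 \<or> 2*l-1-p \<noteq> 0" using assms(3) by auto
    then show "(0::real) ^ p * 0 ^ (2*l-1-p) = 0" by auto
  qed
  ultimately show ?thesis by simp
qed

lemma Lip:
  fixes \<phi> w w' :: "real \<Rightarrow> real" and \<alpha> :: "nat \<Rightarrow> real"
  assumes ex: "(\<lambda>v. \<phi> v - (\<Sum>l\<le>n. \<alpha> l * v^(2*l))) \<in> o[R0](\<lambda>v. v^(2*n))"
      and fw: "filterlim w R0 R0" and fw': "filterlim w' R0 R0"
      and Ow: "w \<in> O[R0](\<lambda>r. r)" and Ow': "w' \<in> O[R0](\<lambda>r. r)"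
      and dw: "(\<lambda>r. w r - w' r) \<in> O[R0](\<lambda>r. r^(2*n))"
  shows "(\<lambda>r. \<phi> (w r) - \<phi> (w' r)) \<in> o[R0](\<lambda>r. r^(2*n))"
proof -
  have e1: "(\<lambda>r. \<phi> (w r) - (\<Sum>l\<le>n. \<alpha> l * w r^(2*l))) \<in> o[R0](\<lambda>r. r^(2*n))"
    using landau_o.small_big_trans[OF landau_o.small.compose[OF ex fw] landau_o.big_power[OF Ow]] .
  have e2: "(\<lambda>r. \<phi> (w' r) - (\<Sum>l\<le>n. \<alpha> l * w' r^(2*l))) \<in> o[R0](\<lambda>r. r^(2*n))"
    using landau_o.small_big_trans[OF landau_o.small.compose[OF ex fw'] landau_o.big_power[OF Ow']] .
  have tw: "(w \<longlongrightarrow> 0) R0" using fw by (simp add: filterlim_at)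
  have tw': "(w' \<longlongrightarrow> 0) R0" using fw' by (simp add: filterlim_at)
  have e3: "(\<lambda>r. \<Sum>l\<le>n. \<alpha> l * (w r^(2*l) - w' r^(2*l))) \<in> o[R0](\<lambda>r. r^(2*n))"
  proof (rule big_sum_in_smallo)
    fix l assume "l \<in> {..n}"
    show "(\<lambda>r. \<alpha> l * (w r^(2*l) - w' r^(2*l))) \<in> o[R0](\<lambda>r. r^(2*n))"
    proof (cases "l = 0")
      case True then show ?thesis by (simp add: zero_small)
    next
      case False
      then have l: "l \<ge> 1" by simp
      have eq: "\<And>r. \<alpha> l * (w r^(2*l) - w' r^(2*l)) =
          (\<alpha> l * (\<Sum>p<Suc (2*l-1). w r ^ p * w' r ^ (2*l-1-p))) * (w r - w' r)"
      proof -
        fix r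
        have "w r^(2*l) - w' r^(2*l) = w r^(Suc (2*l-1)) - w' r^(Suc (2*l-1))" using l by simp
        also have "\<dots> = (w r - w' r) * (\<Sum>p<Suc (2*l-1). w r ^ p * w' r ^ (2*l-1-p))"
          by (rule diff_power_eq_sum)
        finally show "\<alpha> l * (w r^(2*l) - w' r^(2*l)) =
          (\<alpha> l * (\<Sum>p<Suc (2*l-1). w r ^ p * w' r ^ (2*l-1-p))) * (w r - w' r)" by simp
      qed
      have t: "((\<lambda>r. \<alpha> l * (\<Sum>p<Suc (2*l-1). w r ^ p * w' r ^ (2*l-1-p))) \<longlongrightarrow> 0) R0"
        using tendsto_mult[OF tendsto_const S_tendsto0[OF tw tw' l], of "\<alpha> l"] by simp
      show ?thesis unfolding eq by (rule small_of_tendsto0[OF t dw])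
    qed
  qed
  have "(\<lambda>r. (\<phi> (w r) - (\<Sum>l\<le>n. \<alpha> l * w r^(2*l))) - (\<phi> (w' r) - (\<Sum>l\<le>n. \<alpha> l * w' r^(2*l)))
          + (\<Sum>l\<le>n. \<alpha> l * (w r^(2*l) - w' r^(2*l)))) \<in> o[R0](\<lambda>r. r^(2*n))"
    by (intro sum_in_smallo e1 e2 e3)
  moreover have "\<And>r. (\<phi> (w r) - (\<Sum>l\<le>n. \<alpha> l * w r^(2*l))) - (\<phi> (w' r) - (\<Sum>l\<le>n. \<alpha> l * w' r^(2*l)))
          + (\<Sum>l\<le>n. \<alpha> l * (w r^(2*l) - w' r^(2*l))) = \<phi> (w r) - \<phi> (w' r)"
    by (simp add: right_diff_distrib sum_subtractf)
  ultimately show ?thesis by simp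
qed


lemma phi_at_w_tendsto1:
  fixes \<phi> w :: "real \<Rightarrow> real" and \<alpha> :: "nat \<Rightarrow> real"
  assumes ex: "(\<lambda>v. \<phi> v - (\<Sum>l\<le>n. \<alpha> l * v^(2*l))) \<in> o[R0](\<lambda>v. v^(2*n))"
      and a0: "\<alpha> 0 = 1" and fw: "filterlim w R0 R0"
  shows "((\<lambda>r. \<phi> (w r)) \<longlongrightarrow> 1) R0"
proof -
  have tw: "(w \<longlongrightarrow> 0) R0" using fw by (simp add: filterlim_at)
  have e: "(\<lambda>r. \<phi> (w r) - (\<Sum>l\<le>n. \<alpha> l * w r^(2*l))) \<in> o[R0](\<lambda>r. w r^(2*n))"
    using landau_o.small.compose[OF ex fw] .
  have b: "(\<lambda>r. w r^(2*n)) \<in> O[R0](\<lambda>_. 1)"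
  proof -
    have "((\<lambda>r. w r^(2*n)) \<longlongrightarrow> 0^(2*n)) R0" by (intro tendsto_intros tw)
    then show ?thesis by (rule big1_of_tendsto)
  qed
  have t1: "((\<lambda>r. \<phi> (w r) - (\<Sum>l\<le>n. \<alpha> l * w r^(2*l))) \<longlongrightarrow> 0) R0"
    by (rule tendsto0_of_small1, rule landau_o.small_big_trans[OF e b])
  have t2: "((\<lambda>r. (\<Sum>l\<le>n. \<alpha> l * w r^(2*l))) \<longlongrightarrow> (\<Sum>l\<le>n. \<alpha> l * 0^(2*l))) R0"
    by (intro tendsto_intros tw)
  have "(\<Sum>l\<le>n. \<alpha> l * (0::real)^(2*l)) = 1"
    using a0 by (simp add: sum.atMost_shift power_0_left)
  with t2 have t2': "((\<lambda>r. (\<Sum>l\<le>n. \<alpha> l * w r^(2*l))) \<longlongrightarrow> 1) R0" by simp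
  from tendsto_add[OF t1 t2'] show ?thesis by simp
qed

lemma const_small: "f \<in> o[F](g) \<Longrightarrow> (\<lambda>x. (c::real) * f x) \<in> o[F](g)"
  for f g :: "'a \<Rightarrow> real"
  by (cases "c = 0") (auto simp: zero_small)

lemma D2:
  fixes \<phi> \<phi>' P Q P' Q' :: "real \<Rightarrow> real" and \<alpha> :: "nat \<Rightarrow> real"
  assumes n: "n \<ge> 1"
      and ex: "(\<lambda>v. \<phi>' v - (\<Sum>l\<le>n. \<alpha> l * v^(2*l))) \<in> o[R0](\<lambda>v. v^(2*n))"
      and a0: "\<alpha> 0 = 1"
      and dif: "(\<lambda>v. \<phi> v - \<phi>' v - \<delta> * v^(2*n)) \<in> o[R0](\<lambda>v. v^(2*n))"
      and c: "((\<lambda>r. (P r + Q r)/2) \<longlongrightarrow> 1) R0"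
      and d: "((\<lambda>r. (Q r - P r)/r) \<longlongrightarrow> 1) R0"
      and dP: "(\<lambda>r. P' r - P r) \<in> O[R0](\<lambda>r. r^(2*n))"
      and dQ: "(\<lambda>r. Q' r - Q r) \<in> O[R0](\<lambda>r. r^(2*n))"
  shows "(\<lambda>r. (P r + Q r)/2 * \<phi> ((Q r - P r)/(Q r + P r))
             - (P' r + Q' r)/2 * \<phi>' ((Q' r - P' r)/(Q' r + P' r))
             - (\<delta> * r^(2*n) / 4^n + ((P r - P' r) + (Q r - Q' r))/2)) \<in> o[R0](\<lambda>r. r^(2*n))"
proof -
  define c where "c r = (P r + Q r)/2" for r
  define c' where "c' r = (P' r + Q' r)/2" for r
  define w where "w r = (Q r - P r)/(Q r + P r)" for r
  define w' where "w' r = (Q' r - P' r)/(Q' r + P' r)" for r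
  note W = wlemma[OF c d, folded w_def]
  note c'd' = wlemma2[OF n c d dP dQ]
  note W' = wlemma[OF c'd', folded w'_def]
  have c1: "(c \<longlongrightarrow> 1) R0" using c unfolding c_def .
  have c'1: "(c' \<longlongrightarrow> 1) R0" using c'd'(1) unfolding c'_def .
  have cb: "c \<in> O[R0](\<lambda>_. 1)" by (rule big1_of_tendsto[OF c1])
  have ev_ne: "\<forall>\<^sub>F r in R0. r^(2*n) \<noteq> 0" using ev_pos by eventually_elim simp
  have dw: "(\<lambda>r. w r - w' r) \<in> O[R0](\<lambda>r. r^(2*n))"
  proof -
    define D where "D r = (Q r + P r) * (Q' r + P' r)" for r
    have tQ: "((\<lambda>r. 2 * Q r / D r) \<longlongrightarrow> 2 * 1 / ((1 + 1) * (1 + 1))) R0"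
      unfolding D_def by (intro tendsto_intros W(5,6) W'(5,6)) auto
    have tP: "((\<lambda>r. 2 * P r / D r) \<longlongrightarrow> 2 * 1 / ((1 + 1) * (1 + 1))) R0"
      unfolding D_def by (intro tendsto_intros W(5,6) W'(5,6)) auto
    have "(\<lambda>r. P' r - P r) \<in> O[R0](\<lambda>r. r^(2*n))" by (rule dP)
    have A: "(\<lambda>r. (P' r - P r) * (2 * Q r / D r) - (Q' r - Q r) * (2 * P r / D r)) \<in> O[R0](\<lambda>r. r^(2*n))"
      by (intro sum_in_bigo landau_o.big_1_mult'[OF big1_of_tendsto[OF tQ] dP]
                 landau_o.big_1_mult'[OF big1_of_tendsto[OF tP] dQ])
    have "\<forall>\<^sub>F r in R0. (P' r - P r) * (2 * Q r / D r) - (Q' r - Q r) * (2 * P r / D r) = w r - w' r"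
      using W(4) W'(4)
    proof eventually_elim
      case (elim r)
      then have "Q r + P r \<noteq> 0" "Q' r + P' r \<noteq> 0" by auto
      then show ?case unfolding w_def w'_def D_def by (simp add: divide_simps) algebra
    qed
    from landau_o.big.in_cong[OF this] A show ?thesis by simp
  qed
  have t1a: "(\<lambda>r. c r * (\<phi> (w r) - \<phi>' (w r) - \<delta> * w r^(2*n))) \<in> o[R0](\<lambda>r. r^(2*n))"
  proof -
    have "(\<lambda>r. \<phi> (w r) - \<phi>' (w r) - \<delta> * w r^(2*n)) \<in> o[R0](\<lambda>r. r^(2*n))"
      using landau_o.small_big_trans[OF landau_o.small.compose[OF dif W(2)] landau_o.big_power[OF W(3)]]
      unfolding w_def .
    from landau_o.small_1_mult'[OF cb this] show ?thesis by (simp add: mult.commute)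
  qed
  have t1b: "(\<lambda>r. \<delta> * (c r * w r^(2*n) - r^(2*n)/4^n)) \<in> o[R0](\<lambda>r. r^(2*n))"
  proof (rule const_small, rule smalloI_tendsto[OF _ ev_ne])
    have "((\<lambda>r. c r * (w r / r)^(2*n) - 1/4^n) \<longlongrightarrow> 1 * (1/2)^(2*n) - 1/4^n) R0"
      by (intro tendsto_intros c1 W(1)[folded w_def])
    moreover have "1 * (1/2::real)^(2*n) - 1/4^n = 0"
      by (simp add: power_mult power_divide)
    ultimately have t: "((\<lambda>r. c r * (w r / r)^(2*n) - 1/4^n) \<longlongrightarrow> 0) R0" by simp
    show "((\<lambda>r. (c r * w r^(2*n) - r^(2*n)/4^n) / r^(2*n)) \<longlongrightarrow> 0) R0"
    proof (rule Lim_transform_eventually[OF t])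
      show "\<forall>\<^sub>F r in R0. c r * (w r / r)^(2*n) - 1/4^n = (c r * w r^(2*n) - r^(2*n)/4^n) / r^(2*n)"
        using ev_pos by eventually_elim (simp add: field_simps power_divide)
    qed
  qed
  have t2: "(\<lambda>r. c r * (\<phi>' (w r) - \<phi>' (w' r))) \<in> o[R0](\<lambda>r. r^(2*n))"
  proof -
    have "(\<lambda>r. \<phi>' (w r) - \<phi>' (w' r)) \<in> o[R0](\<lambda>r. r^(2*n))"
      by (rule Lip[OF ex W(2)[folded w_def] W'(2)[folded w'_def] W(3)[folded w_def] W'(3)[folded w'_def] dw])
    from landau_o.small_1_mult'[OF cb this] show ?thesis by (simp add: mult.commute)
  qed
  have t3: "(\<lambda>r. (\<phi>' (w' r) - 1) * (c r - c' r)) \<in> o[R0](\<lambda>r. r^(2*n))"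
  proof (rule small_of_tendsto0)
    have "((\<lambda>r. \<phi>' (w' r)) \<longlongrightarrow> 1) R0"
      by (rule phi_at_w_tendsto1[OF ex a0 W'(2)[folded w'_def]])
    then show "((\<lambda>r. \<phi>' (w' r) - 1) \<longlongrightarrow> 0) R0" using tendsto_diff[of _ 1 _ "\<lambda>_. 1" 1] by force
    have "(\<lambda>r. ((P' r - P r) + (Q' r - Q r)) * (-1/2)) \<in> O[R0](\<lambda>r. r^(2*n))"
      by (rule landau_o.big.cmult_in_iff'[THEN iffD2, OF _ sum_in_bigo(1)[OF dP dQ]]) simp
    moreover have "(\<lambda>r. c r - c' r) = (\<lambda>r. ((P' r - P r) + (Q' r - Q r)) * (-1/2))"
      unfolding c_def c'_def by (auto simp: fun_eq_iff field_simps)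
    ultimately show "(\<lambda>r. c r - c' r) \<in> O[R0](\<lambda>r. r^(2*n))" by simp
  qed
  have "(\<lambda>r. c r * (\<phi> (w r) - \<phi>' (w r) - \<delta> * w r^(2*n)) + \<delta> * (c r * w r^(2*n) - r^(2*n)/4^n)
          + c r * (\<phi>' (w r) - \<phi>' (w' r)) + (\<phi>' (w' r) - 1) * (c r - c' r)) \<in> o[R0](\<lambda>r. r^(2*n))"
    by (intro sum_in_smallo t1a t1b t2 t3)
  moreover have "\<And>r. c r * (\<phi> (w r) - \<phi>' (w r) - \<delta> * w r^(2*n)) + \<delta> * (c r * w r^(2*n) - r^(2*n)/4^n)
          + c r * (\<phi>' (w r) - \<phi>' (w' r)) + (\<phi>' (w' r) - 1) * (c r - c' r)
        = (P r + Q r)/2 * \<phi> ((Q r - P r)/(Q r + P r))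
             - (P' r + Q' r)/2 * \<phi>' ((Q' r - P' r)/(Q' r + P' r))
             - (\<delta> * r^(2*n) / 4^n + ((P r - P' r) + (Q r - Q' r))/2)"
    unfolding c_def c'_def w_def[symmetric] w'_def[symmetric] by (simp add: algebra_simps diff_divide_distrib add_divide_distrib)
  ultimately show ?thesis by simp
qed


definition good :: "(real \<Rightarrow> real \<Rightarrow> real) \<Rightarrow> (nat \<Rightarrow> real) \<Rightarrow> bool" where
  "good X a \<longleftrightarrow> is_mean X \<and> homogeneous_mean X \<and> sym_asymp_expansion X a"

lemma good_exp: "good X a \<Longrightarrow> (\<lambda>r. phi X r - (\<Sum>n\<le>k. a n * r^(2*n))) \<in> o[R0](\<lambda>r. r^(2*k))"
  unfolding good_def using expansion_r by blast

lemma good_phi: "good X a \<Longrightarrow> p > 0 \<Longrightarrow> q > 0 \<Longrightarrow> X p q = (p+q)/2 * phi X ((q-p)/(q+p))"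
  unfolding good_def phi_def using mean_phi by blast

lemma good_tendsto1: "good X a \<Longrightarrow> (phi X \<longlongrightarrow> 1) R0"
proof -
  assume g: "good X a"
  have lo: "((\<lambda>r. 1 - r) \<longlongrightarrow> 1 - 0) R0" "((\<lambda>r. 1 + r) \<longlongrightarrow> 1 + 0) R0"
    by (intro tendsto_intros r_tendsto0)+
  show ?thesis
  proof (rule tendsto_sandwich[OF _ _ lo[simplified]])
    show "\<forall>\<^sub>F r in R0. 1 - r \<le> phi X r" using ev01
    proof eventually_elim
      case (elim r) then show ?case
      proof -
        have pos: "1-r > 0" "1+r > 0" using elim by auto
        have "\<forall>s>0. \<forall>t>0. min s t \<le> X s t \<and> X s t \<le> max s t" using g unfolding good_def is_mean_def by blast
        then have "min (1-r) (1+r) \<le> X (1-r) (1+r)" using pos by blast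
        moreover have "min (1-r) (1+r) = 1 - r" using elim by simp
        ultimately show ?thesis unfolding phi_def by simp
      qed
    qed
    show "\<forall>\<^sub>F r in R0. phi X r \<le> 1 + r" using ev01
    proof eventually_elim
      case (elim r) then show ?case
      proof -
        have pos: "1-r > 0" "1+r > 0" using elim by auto
        have "\<forall>s>0. \<forall>t>0. min s t \<le> X s t \<and> X s t \<le> max s t" using g unfolding good_def is_mean_def by blast
        then have "X (1-r) (1+r) \<le> max (1-r) (1+r)" using pos by blast
        moreover have "max (1-r) (1+r) = 1 + r" using elim by simp
        ultimately show ?thesis unfolding phi_def by simp
      qed
    qed
  qed
qed

lemma good_a0: "good X a \<Longrightarrow> a 0 = 1"
proof -
  assume g: "good X a"
  have "(\<lambda>r. phi X r - a 0) \<in> o[R0](\<lambda>_. 1)" using good_exp[OF g, of 0] by simp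
  then have "((\<lambda>r. phi X r - a 0) \<longlongrightarrow> 0) R0" by (rule tendsto0_of_small1)
  then have "((\<lambda>r. phi X r - a 0 + a 0) \<longlongrightarrow> 0 + a 0) R0" by (intro tendsto_intros)
  then have "(phi X \<longlongrightarrow> a 0) R0" by simp
  from tendsto_unique[OF _ this good_tendsto1[OF g]] show ?thesis by simp
qed

lemma good_o1: "good X a \<Longrightarrow> (\<lambda>v. phi X v - 1) \<in> o[R0](\<lambda>v. v)"
proof -
  assume g: "good X a"
  have e: "(\<lambda>r. phi X r - (1 + a 1 * r^2)) \<in> o[R0](\<lambda>r. r^2)"
    using good_exp[OF g, of 1] good_a0[OF g] by simp
  have "(\<lambda>r. phi X r - (1 + a 1 * r^2)) \<in> o[R0](\<lambda>r. r)"
    using landau_o.small_trans[OF e pow_small_r[of 1, simplified]] .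
  moreover have "(\<lambda>r. a 1 * r^2) \<in> o[R0](\<lambda>r. r)"
    using const_small[OF pow_small_r[of 1, simplified]] .
  ultimately have "(\<lambda>r. (phi X r - (1 + a 1 * r^2)) + a 1 * r^2) \<in> o[R0](\<lambda>r. r)"
    by (rule sum_in_smallo)
  then show ?thesis by simp
qed

lemma D1:
  fixes \<phi> P Q :: "real \<Rightarrow> real"
  assumes e: "(\<lambda>v. \<phi> v - 1) \<in> o[R0](\<lambda>v. v)"
      and c: "((\<lambda>r. (P r + Q r)/2) \<longlongrightarrow> 1) R0"
      and d: "((\<lambda>r. (Q r - P r)/r) \<longlongrightarrow> 1) R0"
  shows "(\<lambda>r. (P r + Q r)/2 * \<phi> ((Q r - P r)/(Q r + P r)) - (P r + Q r)/2) \<in> o[R0](\<lambda>r. r)"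
proof -
  note W = wlemma[OF c d]
  have "(\<lambda>r. \<phi> ((Q r - P r)/(Q r + P r)) - 1) \<in> o[R0](\<lambda>r. r)"
    using landau_o.small_big_trans[OF landau_o.small.compose[OF e W(2)] W(3)] .
  from landau_o.small_1_mult'[OF big1_of_tendsto[OF c] this] show ?thesis
    by (simp add: algebra_simps)
qed


definition T :: "(real \<Rightarrow> real \<Rightarrow> real) \<Rightarrow> (real \<Rightarrow> real \<Rightarrow> real) \<Rightarrow> (real \<Rightarrow> real \<Rightarrow> real) \<Rightarrow> real \<Rightarrow> real" where
  "T A B C r = A (C (1-r) (B (1-r) (1+r))) (C (B (1-r) (1+r)) (1+r))"

lemma tendsto_ev_eq: "(f \<longlongrightarrow> l) F \<Longrightarrow> eventually (\<lambda>x. f x = g x) F \<Longrightarrow> l = l' \<Longrightarrow> (g \<longlongrightarrow> l') F"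
  using Lim_transform_eventually by blast

lemma small_r_tendsto0: "f \<in> o[R0](\<lambda>r. r) \<Longrightarrow> (f \<longlongrightarrow> 0) R0"
  by (rule tendsto0_of_small1, rule landau_o.small_big_trans[OF _ big1_of_tendsto[OF r_tendsto0]])

lemma small_r_div: "f \<in> o[R0](\<lambda>r. r) \<Longrightarrow> ((\<lambda>r. f r / r) \<longlongrightarrow> 0) R0"
  by (drule smalloD_tendsto) simp

lemma small_imp_big': "f \<in> o[F](g) \<Longrightarrow> f \<in> O[F](g)" for f g :: "'a \<Rightarrow> real"
  by (rule landau_o.small_imp_big)

lemma pow_big: "(\<lambda>r::real. c * r^(2*n) / d) \<in> O[R0](\<lambda>r. r^(2*n))"
proof -
  have "(\<lambda>r::real. r^(2*n) * (c / d)) \<in> O[R0](\<lambda>r. r^(2*n))"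
    by (cases "c/d = 0") (auto simp: zero_small intro: small_imp_big')
  then show ?thesis by (simp add: field_simps)
qed

lemma inner_conds:
  fixes m :: "real \<Rightarrow> real"
  assumes tm: "(m \<longlongrightarrow> 1) R0" and om: "(\<lambda>r. m r - 1) \<in> o[R0](\<lambda>r. r)"
  shows "((\<lambda>r. ((1 - r) + m r)/2) \<longlongrightarrow> 1) R0"
    and "((\<lambda>r. (m r - (1 - r))/r) \<longlongrightarrow> 1) R0"
    and "((\<lambda>r. (m r + (1 + r))/2) \<longlongrightarrow> 1) R0"
    and "((\<lambda>r. ((1 + r) - m r)/r) \<longlongrightarrow> 1) R0"
proof -
  have q: "((\<lambda>r. (m r - 1)/r) \<longlongrightarrow> 0) R0" by (rule small_r_div[OF om])
  have "((\<lambda>r. ((1 - r) + m r)/2) \<longlongrightarrow> ((1 - 0) + 1)/2) R0"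
    by (intro tendsto_intros tm r_tendsto0) auto
  then show "((\<lambda>r. ((1 - r) + m r)/2) \<longlongrightarrow> 1) R0" by simp
  have "((\<lambda>r. (m r + (1 + r))/2) \<longlongrightarrow> (1 + (1 + 0))/2) R0"
    by (intro tendsto_intros tm r_tendsto0) auto
  then show "((\<lambda>r. (m r + (1 + r))/2) \<longlongrightarrow> 1) R0" by simp
  have "((\<lambda>r. 1 + (m r - 1)/r) \<longlongrightarrow> 1 + 0) R0" by (intro tendsto_intros q)
  then show "((\<lambda>r. (m r - (1 - r))/r) \<longlongrightarrow> 1) R0"
    by (rule tendsto_ev_eq) (use ev_pos in \<open>auto elim!: eventually_mono simp: field_simps\<close>)
  have "((\<lambda>r. 1 - (m r - 1)/r) \<longlongrightarrow> 1 - 0) R0" by (intro tendsto_intros q)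
  then show "((\<lambda>r. ((1 + r) - m r)/r) \<longlongrightarrow> 1) R0"
    by (rule tendsto_ev_eq) (use ev_pos in \<open>auto elim!: eventually_mono simp: field_simps\<close>)
qed


lemma GD:
  assumes n: "n \<ge> 1"
    and gA: "good A aA" and gA': "good A' aA'" and gB: "good B aB" and gB': "good B' aB'"
    and gC: "good C aC" and gC': "good C' aC'"
    and dA: "(\<lambda>v. phi A v - phi A' v - \<delta>A * v^(2*n)) \<in> o[R0](\<lambda>v. v^(2*n))"
    and dB: "(\<lambda>v. phi B v - phi B' v - \<delta>B * v^(2*n)) \<in> o[R0](\<lambda>v. v^(2*n))"
    and dC: "(\<lambda>v. phi C v - phi C' v - \<delta>C * v^(2*n)) \<in> o[R0](\<lambda>v. v^(2*n))"
  shows "(\<lambda>r. T A B C r - T A' B' C' r - (\<delta>A/4^n + \<delta>B/2 + \<delta>C/4^n) * r^(2*n)) \<in> o[R0](\<lambda>r. r^(2*n))"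
proof -
  define m where "m = phi B"
  define m' where "m' = phi B'"
  have tm: "(m \<longlongrightarrow> 1) R0" unfolding m_def by (rule good_tendsto1[OF gB])
  have tm': "(m' \<longlongrightarrow> 1) R0" unfolding m'_def by (rule good_tendsto1[OF gB'])
  have om: "(\<lambda>r. m r - 1) \<in> o[R0](\<lambda>r. r)" unfolding m_def by (rule good_o1[OF gB])
  have om': "(\<lambda>r. m' r - 1) \<in> o[R0](\<lambda>r. r)" unfolding m'_def by (rule good_o1[OF gB'])
  note IC = inner_conds[OF tm om]
  have Em: "(\<lambda>r. m r - m' r - \<delta>B * r^(2*n)) \<in> o[R0](\<lambda>r. r^(2*n))" using dB unfolding m_def m'_def .
  have hm: "(\<lambda>r. m r - m' r) \<in> O[R0](\<lambda>r. r^(2*n))"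
  proof -
    have "(\<lambda>r. (m r - m' r - \<delta>B * r^(2*n)) + \<delta>B * r^(2*n) / 1) \<in> O[R0](\<lambda>r. r^(2*n))"
      by (intro sum_in_bigo small_imp_big' Em pow_big)
    then show ?thesis by simp
  qed
  have hm2: "(\<lambda>r. m' r - m r) \<in> O[R0](\<lambda>r. r^(2*n))"
    using hm landau_o.big.uminus_in_iff[of "\<lambda>r. m r - m' r"] by simp
  have z: "(\<lambda>r::real. 0::real) \<in> O[R0](\<lambda>r. r^(2*n))" by (rule small_imp_big'[OF zero_small])
  have exC': "(\<lambda>v. phi C' v - (\<Sum>l\<le>n. aC' l * v^(2*l))) \<in> o[R0](\<lambda>v. v^(2*n))" by (rule good_exp[OF gC'])
  have exA': "(\<lambda>v. phi A' v - (\<Sum>l\<le>n. aA' l * v^(2*l))) \<in> o[R0](\<lambda>v. v^(2*n))" by (rule good_exp[OF gA'])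
  note a0C' = good_a0[OF gC'] and a0A' = good_a0[OF gA']
  have zP: "(\<lambda>r::real. (1 - r) - (1 - r)) \<in> O[R0](\<lambda>r. r^(2*n))" using z by simp
  have zQ: "(\<lambda>r::real. (1 + r) - (1 + r)) \<in> O[R0](\<lambda>r. r^(2*n))" using z by simp
  have pos: "\<forall>\<^sub>F r in R0. 0 < r \<and> r < 1 \<and> m r > 0 \<and> m' r > 0"
    using ev01 order_tendstoD(1)[OF tm zero_less_one] order_tendstoD(1)[OF tm' zero_less_one]
    by eventually_elim auto
  note EP0 = D2[where P="\<lambda>r. 1 - r" and Q=m and P'="\<lambda>r. 1 - r" and Q'=m', OF n exC' a0C' dC IC(1) IC(2) zP hm2]
  have EP: "(\<lambda>r. C (1-r) (m r) - C' (1-r) (m' r) - (\<delta>C * r^(2*n)/4^n + (m r - m' r)/2)) \<in> o[R0](\<lambda>r. r^(2*n))"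
  proof (rule landau_o.small.in_cong[THEN iffD1, OF _ EP0])
    show "\<forall>\<^sub>F r in R0. ((1-r) + m r)/2 * phi C ((m r - (1-r))/(m r + (1-r)))
           - ((1-r) + m' r)/2 * phi C' ((m' r - (1-r))/(m' r + (1-r)))
           - (\<delta>C * r^(2*n)/4^n + (((1-r) - (1-r)) + (m r - m' r))/2)
         = C (1-r) (m r) - C' (1-r) (m' r) - (\<delta>C * r^(2*n)/4^n + (m r - m' r)/2)"
      using pos by eventually_elim (simp add: good_phi[OF gC] good_phi[OF gC'])
  qed
  note EQ0 = D2[where P=m and Q="\<lambda>r. 1 + r" and P'=m' and Q'="\<lambda>r. 1 + r", OF n exC' a0C' dC IC(3) IC(4) hm2 zQ]
  have EQ: "(\<lambda>r. C (m r) (1+r) - C' (m' r) (1+r) - (\<delta>C * r^(2*n)/4^n + (m r - m' r)/2)) \<in> o[R0](\<lambda>r. r^(2*n))"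
  proof (rule landau_o.small.in_cong[THEN iffD1, OF _ EQ0])
    show "\<forall>\<^sub>F r in R0. (m r + (1+r))/2 * phi C (((1+r) - m r)/((1+r) + m r))
           - (m' r + (1+r))/2 * phi C' (((1+r) - m' r)/((1+r) + m' r))
           - (\<delta>C * r^(2*n)/4^n + ((m r - m' r) + ((1+r) - (1+r)))/2)
         = C (m r) (1+r) - C' (m' r) (1+r) - (\<delta>C * r^(2*n)/4^n + (m r - m' r)/2)"
      using pos by eventually_elim (simp add: good_phi[OF gC] good_phi[OF gC'])
  qed
  define PP where "PP r = C (1-r) (m r)" for r
  define QQ where "QQ r = C (m r) (1+r)" for r
  define PP' where "PP' r = C' (1-r) (m' r)" for r
  define QQ' where "QQ' r = C' (m' r) (1+r)" for r
  have D1P: "(\<lambda>r. PP r - ((1-r) + m r)/2) \<in> o[R0](\<lambda>r. r)"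
  proof (rule landau_o.small.in_cong[THEN iffD1, OF _ D1[OF good_o1[OF gC] IC(1) IC(2)]])
    show "\<forall>\<^sub>F r in R0. ((1-r) + m r)/2 * phi C ((m r - (1-r))/(m r + (1-r))) - ((1-r) + m r)/2
        = PP r - ((1-r) + m r)/2"
      using pos by eventually_elim (simp add: good_phi[OF gC] PP_def)
  qed
  have D1Q: "(\<lambda>r. QQ r - (m r + (1+r))/2) \<in> o[R0](\<lambda>r. r)"
  proof (rule landau_o.small.in_cong[THEN iffD1, OF _ D1[OF good_o1[OF gC] IC(3) IC(4)]])
    show "\<forall>\<^sub>F r in R0. (m r + (1+r))/2 * phi C (((1+r) - m r)/((1+r) + m r)) - (m r + (1+r))/2
        = QQ r - (m r + (1+r))/2"
      using pos by eventually_elim (simp add: good_phi[OF gC] QQ_def)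
  qed
  have oc: "((\<lambda>r. (PP r + QQ r)/2) \<longlongrightarrow> 1) R0"
  proof -
    have "((\<lambda>r. ((PP r - ((1-r) + m r)/2) + (QQ r - (m r + (1+r))/2))/2 + ((1-r) + m r + (m r + (1+r)))/4)
           \<longlongrightarrow> (0 + 0)/2 + ((1-0) + 1 + (1 + (1 + 0)))/4) R0"
      by (intro tendsto_intros small_r_tendsto0 D1P D1Q tm r_tendsto0) auto
    then show ?thesis by (rule tendsto_fun_eq) (simp_all add: field_simps)
  qed
  have od: "((\<lambda>r. (QQ r - PP r)/r) \<longlongrightarrow> 1) R0"
  proof -
    have "((\<lambda>r. (QQ r - (m r + (1+r))/2)/r - (PP r - ((1-r) + m r)/2)/r + 1) \<longlongrightarrow> 0 - 0 + 1) R0"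
      by (intro tendsto_intros small_r_div D1P D1Q)
    then show ?thesis
      by (rule tendsto_ev_eq) (use ev_pos in \<open>auto elim!: eventually_mono simp: field_simps\<close>)
  qed
  have EP': "(\<lambda>r. PP r - PP' r - (\<delta>C * r^(2*n)/4^n + (m r - m' r)/2)) \<in> o[R0](\<lambda>r. r^(2*n))"
    using EP unfolding PP_def PP'_def .
  have EQ': "(\<lambda>r. QQ r - QQ' r - (\<delta>C * r^(2*n)/4^n + (m r - m' r)/2)) \<in> o[R0](\<lambda>r. r^(2*n))"
    using EQ unfolding QQ_def QQ'_def .
  have dPP: "(\<lambda>r. PP' r - PP r) \<in> O[R0](\<lambda>r. r^(2*n))"
  proof -
    have "(\<lambda>r. - (PP r - PP' r - (\<delta>C * r^(2*n)/4^n + (m r - m' r)/2)) - \<delta>C * r^(2*n)/4^n + (m' r - m r)/2) \<in> O[R0](\<lambda>r. r^(2*n))"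
      by (intro sum_in_bigo small_imp_big' EP' pow_big landau_o.big.cdiv_in_iff'[THEN iffD2] hm2
          landau_o.big.uminus_in_iff[THEN iffD2]) auto
    moreover have "(\<lambda>r. - (PP r - PP' r - (\<delta>C * r^(2*n)/4^n + (m r - m' r)/2)) - \<delta>C * r^(2*n)/4^n + (m' r - m r)/2) = (\<lambda>r. PP' r - PP r)"
      by (auto simp: fun_eq_iff field_simps)
    ultimately show ?thesis by simp
  qed
  have dQQ: "(\<lambda>r. QQ' r - QQ r) \<in> O[R0](\<lambda>r. r^(2*n))"
  proof -
    have "(\<lambda>r. - (QQ r - QQ' r - (\<delta>C * r^(2*n)/4^n + (m r - m' r)/2)) - \<delta>C * r^(2*n)/4^n + (m' r - m r)/2) \<in> O[R0](\<lambda>r. r^(2*n))"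
      by (intro sum_in_bigo small_imp_big' EQ' pow_big landau_o.big.cdiv_in_iff'[THEN iffD2] hm2
          landau_o.big.uminus_in_iff[THEN iffD2]) auto
    moreover have "(\<lambda>r. - (QQ r - QQ' r - (\<delta>C * r^(2*n)/4^n + (m r - m' r)/2)) - \<delta>C * r^(2*n)/4^n + (m' r - m r)/2) = (\<lambda>r. QQ' r - QQ r)"
      by (auto simp: fun_eq_iff field_simps)
    ultimately show ?thesis by simp
  qed
  note EO0 = D2[where P=PP and Q=QQ and P'=PP' and Q'=QQ', OF n exA' a0A' dA oc od dPP dQQ]
  have posO: "\<forall>\<^sub>F r in R0. PP r > 0 \<and> QQ r > 0 \<and> PP' r > 0 \<and> QQ' r > 0"
    using wlemma(4)[OF oc od] wlemma(4)[OF wlemma2[OF n oc od dPP dQQ]] by eventually_elim auto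
  have EO: "(\<lambda>r. T A B C r - T A' B' C' r - (\<delta>A * r^(2*n)/4^n + ((PP r - PP' r) + (QQ r - QQ' r))/2)) \<in> o[R0](\<lambda>r. r^(2*n))"
  proof (rule landau_o.small.in_cong[THEN iffD1, OF _ EO0])
    show "\<forall>\<^sub>F r in R0. (PP r + QQ r)/2 * phi A ((QQ r - PP r)/(QQ r + PP r))
           - (PP' r + QQ' r)/2 * phi A' ((QQ' r - PP' r)/(QQ' r + PP' r))
           - (\<delta>A * r^(2*n)/4^n + ((PP r - PP' r) + (QQ r - QQ' r))/2)
         = T A B C r - T A' B' C' r - (\<delta>A * r^(2*n)/4^n + ((PP r - PP' r) + (QQ r - QQ' r))/2)"
      using posO by eventually_elim (simp add: good_phi[OF gA] good_phi[OF gA'] T_def PP_def QQ_def PP'_def QQ'_def m_def m'_def phi_def)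
  qed
  have "(\<lambda>r. (T A B C r - T A' B' C' r - (\<delta>A * r^(2*n)/4^n + ((PP r - PP' r) + (QQ r - QQ' r))/2))
      + (PP r - PP' r - (\<delta>C * r^(2*n)/4^n + (m r - m' r)/2)) / 2
      + (QQ r - QQ' r - (\<delta>C * r^(2*n)/4^n + (m r - m' r)/2)) / 2
      + (m r - m' r - \<delta>B * r^(2*n)) / 2) \<in> o[R0](\<lambda>r. r^(2*n))"
    by (intro sum_in_smallo EO landau_o.small.cdiv_in_iff'[THEN iffD2] EP' EQ' Em) auto
  moreover have "(\<lambda>r. (T A B C r - T A' B' C' r - (\<delta>A * r^(2*n)/4^n + ((PP r - PP' r) + (QQ r - QQ' r))/2))
      + (PP r - PP' r - (\<delta>C * r^(2*n)/4^n + (m r - m' r)/2)) / 2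
      + (QQ r - QQ' r - (\<delta>C * r^(2*n)/4^n + (m r - m' r)/2)) / 2
      + (m r - m' r - \<delta>B * r^(2*n)) / 2) = (\<lambda>r. T A B C r - T A' B' C' r - (\<delta>A/4^n + \<delta>B/2 + \<delta>C/4^n) * r^(2*n))"
    by (auto simp: fun_eq_iff field_simps)
  ultimately show ?thesis by simp
qed


lemma diff_IH:
  assumes gX: "good X aX" and gY: "good Y aY" and IH: "\<forall>j<n. aX j = aY j"
  shows "(\<lambda>v. phi X v - phi Y v - (aX n - aY n) * v^(2*n)) \<in> o[R0](\<lambda>v. v^(2*n))"
proof -
  have "(\<lambda>v. (phi X v - (\<Sum>l\<le>n. aX l * v^(2*l))) - (phi Y v - (\<Sum>l\<le>n. aY l * v^(2*l)))) \<in> o[R0](\<lambda>v. v^(2*n))"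
    by (intro sum_in_smallo good_exp[OF gX] good_exp[OF gY])
  moreover have h: "\<And>v. (\<Sum>l\<le>n. aX l * v^(2*l)) - (\<Sum>l\<le>n. aY l * v^(2*l)) = (aX n - aY n) * v^(2*n)"
  proof -
    fix v :: real
    have "(\<Sum>l<n. aX l * v^(2*l)) = (\<Sum>l<n. aY l * v^(2*l))" using IH by (intro sum.cong) auto
    then show "(\<Sum>l\<le>n. aX l * v^(2*l)) - (\<Sum>l\<le>n. aY l * v^(2*l)) = (aX n - aY n) * v^(2*n)"
      by (simp add: lessThan_Suc_atMost[symmetric] algebra_simps)
  qed
  moreover have "\<And>v. (phi X v - (\<Sum>l\<le>n. aX l * v^(2*l))) - (phi Y v - (\<Sum>l\<le>n. aY l * v^(2*l)))
     = phi X v - phi Y v - (aX n - aY n) * v^(2*n)"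
    using h by (metis (no_types, lifting) diff_diff_eq2 diff_add_eq add_diff_eq diff_diff_eq)
  ultimately show ?thesis by simp
qed

lemma coef_zero:
  assumes "(\<lambda>r. c * r^(2*n)) \<in> o[R0](\<lambda>r::real. r^(2*n))"
  shows "c = 0"
proof (rule ccontr)
  assume c: "c \<noteq> 0"
  then have "(\<lambda>r. r^(2*n)) \<in> o[R0](\<lambda>r::real. r^(2*n))" using assms by simp
  then have "eventually (\<lambda>r::real. r^(2*n) = 0) R0" by (simp add: landau_o.small_refl_iff)
  then have "eventually (\<lambda>r::real. False) R0" using ev_pos by eventually_elim simp
  then show False by (simp add: trivial_limit_at_right_real)
qed

lemma ev_diff_zero:
  assumes "eventually (\<lambda>r. f r = g r) R0"
      and "(\<lambda>r. f r - g r - c * r^(2*n)) \<in> o[R0](\<lambda>r::real. r^(2*n))"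
  shows "c = 0"
proof (rule coef_zero)
  show "(\<lambda>r. c * r^(2*n)) \<in> o[R0](\<lambda>r::real. r^(2*n))"
  proof -
    have "(\<lambda>r. - (f r - g r - c * r^(2*n))) \<in> o[R0](\<lambda>r::real. r^(2*n))"
      by (rule landau_o.small.uminus_in_iff[THEN iffD2, OF assms(2)])
    moreover have "eventually (\<lambda>r. - (f r - g r - c * r^(2*n)) = c * r^(2*n)) R0"
      using assms(1) by eventually_elim simp
    ultimately show ?thesis using landau_o.small.in_cong[THEN iffD1] by metis
  qed
qed

lemma TKMN:
  assumes "stabilizable K M N"
  shows "eventually (\<lambda>r. phi N r = T K M N r) R0"
  using ev01
proof eventually_elim
  case (elim r)
  then have "1 - r > 0" "1 + r > 0" by auto
  then show ?case using assms unfolding stabilizable_def phi_def T_def by blast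
qed

lemma TMMM:
  assumes "stable_mean M"
  shows "eventually (\<lambda>r. phi M r = T M M M r) R0"
  using ev01
proof eventually_elim
  case (elim r)
  then have "1 - r > 0" "1 + r > 0" by auto
  then show ?case using assms unfolding stable_mean_def phi_def T_def by blast
qed

lemma KM_eq:
  assumes gK: "good K aK" and gM: "good M aM" and gN: "good N aN"
      and s1: "stabilizable K M N" and s2: "stabilizable M K N"
  shows "aK n = aM n"
proof (induction n rule: less_induct)
  case (less n)
  show ?case
  proof (cases "n = 0")
    case True then show ?thesis using good_a0[OF gK] good_a0[OF gM] by simp
  next
    case False
    then have n: "n \<ge> 1" by simp
    define \<delta> where "\<delta> = aK n - aM n"
    have d1: "(\<lambda>v. phi K v - phi M v - \<delta> * v^(2*n)) \<in> o[R0](\<lambda>v. v^(2*n))"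
      unfolding \<delta>_def by (rule diff_IH[OF gK gM]) (use less in auto)
    have d2: "(\<lambda>v. phi M v - phi K v - (-\<delta>) * v^(2*n)) \<in> o[R0](\<lambda>v. v^(2*n))"
    proof -
      have "(\<lambda>v. - (phi K v - phi M v - \<delta> * v^(2*n))) \<in> o[R0](\<lambda>v. v^(2*n))"
        by (rule landau_o.small.uminus_in_iff[THEN iffD2, OF d1])
      then show ?thesis by (simp add: algebra_simps)
    qed
    have d3: "(\<lambda>v. phi N v - phi N v - 0 * v^(2*n)) \<in> o[R0](\<lambda>v. v^(2*n))" by (simp add: zero_small)
    have G: "(\<lambda>r. T K M N r - T M K N r - (\<delta>/4^n + (-\<delta>)/2 + 0/4^n) * r^(2*n)) \<in> o[R0](\<lambda>r. r^(2*n))"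
      by (rule GD[OF n gK gM gM gK gN gN d1 d2 d3])
    have ev: "eventually (\<lambda>r. T K M N r = T M K N r) R0"
      using TKMN[OF s1] TKMN[OF s2] by eventually_elim simp
    have "\<delta>/4^n + (-\<delta>)/2 + 0/4^n = 0" by (rule ev_diff_zero[OF ev G])
    moreover have "(4::real)^n \<ge> 4^1" using n by (intro power_increasing) auto
    ultimately have "\<delta> = 0" by (auto simp: field_simps)
    then show ?thesis unfolding \<delta>_def by simp
  qed
qed

lemma NM_eq:
  assumes gK: "good K aK" and gM: "good M aM" and gN: "good N aN"
      and s1: "stabilizable K M N" and st: "stable_mean M" and KM: "\<And>n. aK n = aM n"
  shows "aN n = aM n"
proof (induction n rule: less_induct)
  case (less n)
  show ?case
  proof (cases "n = 0")
    case True then show ?thesis using good_a0[OF gN] good_a0[OF gM] by simp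
  next
    case False
    then have n: "n \<ge> 1" by simp
    define \<delta> where "\<delta> = aN n - aM n"
    have d1: "(\<lambda>v. phi N v - phi M v - \<delta> * v^(2*n)) \<in> o[R0](\<lambda>v. v^(2*n))"
      unfolding \<delta>_def by (rule diff_IH[OF gN gM]) (use less in auto)
    have dKM: "(\<lambda>v. phi K v - phi M v - 0 * v^(2*n)) \<in> o[R0](\<lambda>v. v^(2*n))"
      using diff_IH[OF gK gM, of n] KM by simp
    have dMM: "(\<lambda>v. phi M v - phi M v - 0 * v^(2*n)) \<in> o[R0](\<lambda>v. v^(2*n))" by (simp add: zero_small)
    have G: "(\<lambda>r. T K M N r - T M M M r - (0/4^n + 0/2 + \<delta>/4^n) * r^(2*n)) \<in> o[R0](\<lambda>r. r^(2*n))"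
      by (rule GD[OF n gK gM gM gM gN gM dKM dMM d1])
    have G2: "(\<lambda>r. (T K M N r - T M M M r - (0/4^n + 0/2 + \<delta>/4^n) * r^(2*n))
                  - (phi N r - phi M r - \<delta> * r^(2*n))) \<in> o[R0](\<lambda>r. r^(2*n))"
      by (rule sum_in_smallo(2)[OF G d1])
    have ev: "eventually (\<lambda>r. (T K M N r - T M M M r - (0/4^n + 0/2 + \<delta>/4^n) * r^(2*n))
                  - (phi N r - phi M r - \<delta> * r^(2*n)) = (\<delta> - \<delta>/4^n) * r^(2*n)) R0"
      using TKMN[OF s1] TMMM[OF st] by eventually_elim (simp add: algebra_simps)
    have "(\<lambda>r. (\<delta> - \<delta>/4^n) * r^(2*n)) \<in> o[R0](\<lambda>r::real. r^(2*n))"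
      using landau_o.small.in_cong[THEN iffD1, OF ev G2] .
    then have "\<delta> - \<delta>/4^n = 0" by (rule coef_zero)
    moreover have "(4::real)^n \<ge> 4^1" using n by (intro power_increasing) auto
    ultimately have "\<delta> = 0" by (auto simp: field_simps)
    then show ?thesis unfolding \<delta>_def by simp
  qed
qed


definition p4 :: "real \<Rightarrow> real \<Rightarrow> real \<Rightarrow> real" where
  "p4 a b r = (1 + (-1/2)*r + (3/4)*r^2*a + (1/8)*r^3*a + (1/2)*r^3*a^2 + (9/16)*r^4*b + (1/16)*r^4*a + (1/8)*r^4*a^2 + (1/4)*r^4*a^3)"
definition p4n :: "real \<Rightarrow> real \<Rightarrow> real \<Rightarrow> real" where
  "p4n a b r = (1 + (1/2)*r + (3/4)*r^2*a + (-1/8)*r^3*a + (-1/2)*r^3*a^2 + (9/16)*r^4*b + (1/16)*r^4*a + (1/8)*r^4*a^2 + (1/4)*r^4*a^3)"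
definition bp :: "real \<Rightarrow> real \<Rightarrow> real" where
  "bp a b = ((5/8)*b + (1/16)*a + (-3/16)*a^2 + (-1/4)*a^3)"
definition RP :: "real \<Rightarrow> real \<Rightarrow> real \<Rightarrow> real" where
  "RP a b r = ((3/2)*b + (1/2)*a + 12*a*b + (-2)*a^3 + (-3/4)*r*b + (-1/2)*r*a + (-23/2)*r*a*b + (-1/2)*r*a^2 + 14*r*a^2*b + 1*r*a^3 + (-2)*r*a^4 + (1/8)*r^2*b + 4*r^2*b^2 + (1/8)*r^2*a + (9/2)*r^2*a*b + 1*r^2*a^2 + (-4)*r^2*a^2*b + (1/2)*r^2*a^3 + 4*r^2*a^3*b + (-3/2)*r^3*b^2 + (-3/8)*r^3*a*b + 16*r^3*a*b^2 + (-3/8)*r^3*a^2 + (-7/4)*r^3*a^2*b + (-3/4)*r^3*a^3 + 6*r^3*a^3*b + (-1/2)*r^3*a^4 + 1*r^3*a^4*b + (-2)*r^3*a^5 + (3/2)*r^4*b^2 + (3/4)*r^4*a*b + 4*r^4*a*b^2 + (3/8)*r^4*a^2*b + 12*r^4*a^2*b^2 + (3/8)*r^4*a^3 + (-6)*r^4*a^3*b + (1/2)*r^4*a^4 + (1/2)*r^4*a^5 + (-3/8)*r^5*b^2 + 6*r^5*b^3 + (-3/8)*r^5*a*b + (-13/2)*r^5*a*b^2 + (-3/4)*r^5*a^2*b + 12*r^5*a^2*b^2 + (-1/8)*r^5*a^3*b + 4*r^5*a^3*b^2 + (-1/8)*r^5*a^4 + (-2)*r^5*a^4*b + (-1/4)*r^5*a^5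 + (-1/2)*r^5*a^6 + (3/4)*r^6*a*b^2 + 12*r^6*a*b^3 + (3/4)*r^6*a^2*b + (-6)*r^6*a^2*b^2 + (3/4)*r^6*a^3*b + (-3/4)*r^7*b^3 + 4*r^7*a*b^3 + (-3/8)*r^7*a^2*b^2 + 6*r^7*a^2*b^3 + (-3/8)*r^7*a^3*b + 3*r^7*a^3*b^2 + (-3/4)*r^7*a^4*b + (-3/2)*r^7*a^5*b + (3/8)*r^8*b^3 + 4*r^8*b^4 + (3/8)*r^8*a*b^2 + (-3/2)*r^8*a^3*b^2 + (-7/8)*r^9*a*b^3 + 4*r^9*a*b^4 + (-3/8)*r^9*a^2*b^2 + 4*r^9*a^2*b^3 + (-3/4)*r^9*a^3*b^2 + (-3/2)*r^9*a^4*b^2 + (-1/4)*r^10*a*b^3 + (-1)*r^10*a^2*b^3 + (-1/8)*r^11*b^4 + 1*r^11*b^5 + (-1/8)*r^11*a*b^3 + 1*r^11*a*b^4 + (-1/4)*r^11*a^2*b^3 + (-1/2)*r^11*a^3*b^3)"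
definition RQ :: "real \<Rightarrow> real \<Rightarrow> real \<Rightarrow> real" where
  "RQ a b r = ((-3/2)*b + (-1/2)*a + (-12)*a*b + 2*a^3 + (-3/4)*r*b + (-1/2)*r*a + (-23/2)*r*a*b + (-1/2)*r*a^2 + 14*r*a^2*b + 1*r*a^3 + (-2)*r*a^4 + (-1/8)*r^2*b + (-4)*r^2*b^2 + (-1/8)*r^2*a + (-9/2)*r^2*a*b + (-1)*r^2*a^2 + 4*r^2*a^2*b + (-1/2)*r^2*a^3 + (-4)*r^2*a^3*b + (-3/2)*r^3*b^2 + (-3/8)*r^3*a*b + 16*r^3*a*b^2 + (-3/8)*r^3*a^2 + (-7/4)*r^3*a^2*b + (-3/4)*r^3*a^3 + 6*r^3*a^3*b + (-1/2)*r^3*a^4 + 1*r^3*a^4*b + (-2)*r^3*a^5 + (-3/2)*r^4*b^2 + (-3/4)*r^4*a*b + (-4)*r^4*a*b^2 + (-3/8)*r^4*a^2*b + (-12)*r^4*a^2*b^2 + (-3/8)*r^4*a^3 + 6*r^4*a^3*b + (-1/2)*r^4*a^4 + (-1/2)*r^4*a^5 + (-3/8)*r^5*b^2 + 6*r^5*b^3 + (-3/8)*r^5*a*b + (-13/2)*r^5*a*b^2 + (-3/4)*r^5*a^2*b + 12*r^5*a^2*b^2 + (-1/8)*r^5*a^3*b + 4*r^5*a^3*b^2 + (-1/8)*r^5*a^4 + (-2)*r^5*a^4*b + (-1/4)*r^5*a^5 + (-1/2)*r^5*a^6 + (-3/4)*r^6*a*b^2 + (-12)*r^6*a*b^3 +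 (-3/4)*r^6*a^2*b + 6*r^6*a^2*b^2 + (-3/4)*r^6*a^3*b + (-3/4)*r^7*b^3 + 4*r^7*a*b^3 + (-3/8)*r^7*a^2*b^2 + 6*r^7*a^2*b^3 + (-3/8)*r^7*a^3*b + 3*r^7*a^3*b^2 + (-3/4)*r^7*a^4*b + (-3/2)*r^7*a^5*b + (-3/8)*r^8*b^3 + (-4)*r^8*b^4 + (-3/8)*r^8*a*b^2 + (3/2)*r^8*a^3*b^2 + (-7/8)*r^9*a*b^3 + 4*r^9*a*b^4 + (-3/8)*r^9*a^2*b^2 + 4*r^9*a^2*b^3 + (-3/4)*r^9*a^3*b^2 + (-3/2)*r^9*a^4*b^2 + (1/4)*r^10*a*b^3 + 1*r^10*a^2*b^3 + (-1/8)*r^11*b^4 + 1*r^11*b^5 + (-1/8)*r^11*a*b^3 + 1*r^11*a*b^4 + (-1/4)*r^11*a^2*b^3 + (-1/2)*r^11*a^3*b^3)"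
definition RO :: "real \<Rightarrow> real \<Rightarrow> real \<Rightarrow> real" where
  "RO a b r = ((-11/2)*r*a*b + (-1/4)*r*a^2 + (-4)*r*a^2*b + (7/2)*r*a^3 + 7*r*a^4 + 4*r*a^5 + (-27/16)*r^3*b^2 + (-3/16)*r^3*a*b + (-9/4)*r^3*a^2*b + (-1/16)*r^3*a^3 + (27/4)*r^3*a^3*b + (51/8)*r^3*a^4 + 6*r^3*a^4*b + (51/4)*r^3*a^5 + 8*r^3*a^6 + (-81/16)*r^5*a*b^2 + (-27/32)*r^5*a^2*b + (-1/32)*r^5*a^3 + (169/32)*r^5*a^3*b + (45/64)*r^5*a^4 + (93/8)*r^5*a^4*b + (169/32)*r^5*a^5 + (3/2)*r^5*a^5*b + (181/16)*r^5*a^6 + (-4)*r^5*a^6*b + (39/4)*r^5*a^7 + 2*r^5*a^8 + (-243/256)*r^7*b^3 + (-27/128)*r^7*a*b^2 + (-3/256)*r^7*a^2*b + (-27/256)*r^7*a^2*b^2 + (33/256)*r^7*a^3*b + (135/32)*r^7*a^3*b^2 + (1/64)*r^7*a^4 + (403/64)*r^7*a^4*b + (173/256)*r^7*a^5 + (775/64)*r^7*a^5*b + (329/128)*r^7*a^6 + (129/16)*r^7*a^6*b + (361/64)*r^7*a^7 + 1*r^7*a^7*b + (49/8)*r^7*a^8 + 1*r^7*a^8*b + (5/2)*r^7*a^9 + (-729/512)*r^9*a*b^3 + (-405/1024)*r^9*a^2*b^2 + (-9/256)*r^9*a^3*b + (729/256)*r^9*a^3*b^2 + (-1/1024)*r^9*a^4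 + (171/256)*r^9*a^4*b + (1215/256)*r^9*a^4*b^2 + (5/128)*r^9*a^5 + (333/128)*r^9*a^5*b + (81/64)*r^9*a^5*b^2 + (15/64)*r^9*a^6 + (369/64)*r^9*a^6*b + (13/16)*r^9*a^7 + (45/8)*r^9*a^7*b + (13/8)*r^9*a^8 + (9/8)*r^9*a^8*b + (33/16)*r^9*a^9 + (23/16)*r^9*a^10 + (1/4)*r^9*a^11 + (-729/4096)*r^11*b^4 + (-243/4096)*r^11*a*b^3 + (-27/4096)*r^11*a^2*b^2 + (3159/4096)*r^11*a^2*b^3 + (-1/4096)*r^11*a^3*b + (1107/4096)*r^11*a^3*b^2 + (1215/1024)*r^11*a^3*b^3 + (129/4096)*r^11*a^4*b + (2025/2048)*r^11*a^4*b^2 + (5/4096)*r^11*a^5 + (183/1024)*r^11*a^5*b + (2079/1024)*r^11*a^5*b^2 + (19/2048)*r^11*a^6 + (607/1024)*r^11*a^6*b + (459/256)*r^11*a^6*b^2 + (21/512)*r^11*a^7 + (291/256)*r^11*a^7*b + (59/512)*r^11*a^8 + (345/256)*r^11*a^8*b + (29/128)*r^11*a^9 + (53/64)*r^11*a^9*b + (39/128)*r^11*a^10 + (17/64)*r^11*a^11 + (1/8)*r^11*a^12)"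

lemma idP: "((1 - r) + (1 + a*r^2 + b*r^4))^4 + a*((1 + a*r^2 + b*r^4) - (1 - r))^2*((1 - r) + (1 + a*r^2 + b*r^4))^2
   + b*((1 + a*r^2 + b*r^4) - (1 - r))^4 - 2*((1 - r) + (1 + a*r^2 + b*r^4))^3 * p4 a b r = r^5 * RP a b r"
  unfolding p4_def RP_def by algebra

lemma idQ: "((1 + a*r^2 + b*r^4) + (1 + r))^4 + a*((1 + r) - (1 + a*r^2 + b*r^4))^2*((1 + a*r^2 + b*r^4) + (1 + r))^2
   + b*((1 + r) - (1 + a*r^2 + b*r^4))^4 - 2*((1 + a*r^2 + b*r^4) + (1 + r))^3 * p4n a b r = r^5 * RQ a b r"
  unfolding p4n_def RQ_def by algebra

lemma idO: "(p4 a b r + p4n a b r)^4 + a*(p4n a b r - p4 a b r)^2*(p4 a b r + p4n a b r)^2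
   + b*(p4n a b r - p4 a b r)^4 - 2*(p4 a b r + p4n a b r)^3 * (1 + a*r^2 + bp a b * r^4) = r^5 * RO a b r"
  unfolding p4_def p4n_def bp_def RO_def by algebra


lemma S_alg: "sx \<noteq> 0 \<Longrightarrow> sx/2 * (1 + a*(dx/sx)^2 + b*(dx/sx)^4) = (sx^4 + a*dx^2* sx^2 + b*dx^4) / (2* sx^3)"
  for sx dx a b :: real
  by (simp add: field_simps; algebra)

lemma S_alg2: "pp + qq \<noteq> 0 \<Longrightarrow> (pp + qq)/2 * (1 + a*((qq - pp)/(qq + pp))^2 + b*((qq - pp)/(qq + pp))^4)
   = ((pp + qq)^4 + a*(qq - pp)^2 * (pp + qq)^2 + b*(qq - pp)^4) / (2*(pp + qq)^3)"
  for pp qq a b :: real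
proof -
  assume h: "pp + qq \<noteq> 0"
  have e: "qq + pp = pp + qq" by simp
  show ?thesis unfolding e by (rule S_alg[OF h])
qed

lemma alg_O:
  fixes p q t R :: "real \<Rightarrow> real"
  assumes pq: "((\<lambda>r. p r + q r) \<longlongrightarrow> 2) R0"
    and id: "\<And>r. (p r + q r)^4 + a*(q r - p r)^2*(p r + q r)^2 + b*(q r - p r)^4 - 2*(p r + q r)^3 * t r = r^5 * R r"
    and cR: "isCont R 0"
  shows "(\<lambda>r. (p r + q r)/2 * (1 + a*((q r - p r)/(q r + p r))^2 + b*((q r - p r)/(q r + p r))^4) - t r) \<in> O[R0](\<lambda>r. r^5)"
proof -
  have tR: "(R \<longlongrightarrow> R 0) R0"
    using cR unfolding isCont_def by (rule tendsto_mono[OF at_le[OF subset_UNIV]])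
  have B: "((\<lambda>r. R r / (2*(p r + q r)^3)) \<longlongrightarrow> R 0 / (2*2^3)) R0"
    by (intro tendsto_intros tR pq) simp
  have C: "(\<lambda>r. r^5 * (R r / (2*(p r + q r)^3))) \<in> O[R0](\<lambda>r. r^5 * 1)"
    by (rule landau_o.big.mult_left[OF big1_of_tendsto[OF B]])
  have ev: "eventually (\<lambda>r. p r + q r > 0) R0" using order_tendstoD(1)[OF pq, of 0] by simp
  have "eventually (\<lambda>r. r^5 * (R r / (2*(p r + q r)^3)) =
      (p r + q r)/2 * (1 + a*((q r - p r)/(q r + p r))^2 + b*((q r - p r)/(q r + p r))^4) - t r) R0"
    using ev
  proof eventually_elim
    case (elim r)
    define sx where "sx = p r + q r"
    define dx where "dx = q r - p r"
    have s0: "sx \<noteq> 0" using elim unfolding sx_def by simp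
    have "q r + p r = sx" unfolding sx_def by simp
    have "(p r + q r)/2 * (1 + a*((q r - p r)/(q r + p r))^2 + b*((q r - p r)/(q r + p r))^4) - t r
        = (sx^4 + a*dx^2* sx^2 + b*dx^4) / (2* sx^3) - t r"
      using s0 unfolding sx_def dx_def by (simp only: S_alg2 not_False_eq_True)
    also have "\<dots> = (sx^4 + a*dx^2* sx^2 + b*dx^4 - 2* sx^3 * t r) / (2* sx^3)"
      using s0 by (simp add: field_simps)
    also have "\<dots> = r^5 * R r / (2* sx^3)" using id[of r] unfolding sx_def dx_def by simp
    finally show ?case unfolding sx_def by simp
  qed
  then show ?thesis using landau_o.big.in_cong[THEN iffD1, OF _ C] by simp
qed


lemma r5_small: "(\<lambda>r::real. r^5) \<in> o[R0](\<lambda>r. r^(2*2))"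
proof (rule smalloI_tendsto)
  show "((\<lambda>r::real. r^5 / r^(2*2)) \<longlongrightarrow> 0) R0"
    by (rule tendsto_ev_eq[OF r_tendsto0]) (use ev_pos in \<open>auto elim!: eventually_mono simp: field_simps eval_nat_numeral\<close>)
  show "\<forall>\<^sub>F x in R0. x^(2*2) \<noteq> (0::real)" using ev_pos by eventually_elim simp
qed

lemma O5_small: "f \<in> O[R0](\<lambda>r. r^5) \<Longrightarrow> f \<in> o[R0](\<lambda>r::real. r^(2*2))"
  using landau_o.big_small_trans r5_small by blast

lemma isCont_tendsto_R0: "isCont f 0 \<Longrightarrow> f 0 = L \<Longrightarrow> (f \<longlongrightarrow> L) R0"
  unfolding isCont_def by (metis tendsto_mono[OF at_le[OF subset_UNIV]])

lemma small_ev_transfer: "f \<in> o[F](g) \<Longrightarrow> eventually (\<lambda>x. f x = h x) F \<Longrightarrow> h \<in> o[F](g)"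
  for f g h :: "'a \<Rightarrow> real"
  using landau_o.small.in_cong by blast

lemma stable_a2:
  assumes gM: "good M aM" and st: "stable_mean M"
  shows "aM 2 = 1/6 * aM 1 * (1 + aM 1) * (1 - 4 * aM 1)"
proof -
  define a where "a = aM 1"
  define b where "b = aM 2"
  have a0: "aM 0 = 1" by (rule good_a0[OF gM])
  have sum2: "\<And>v. (\<Sum>l\<le>2. aM l * v^(2*l)) = 1 + a* v^2 + b* v^4"
    by (simp add: numeral_2_eq_2 a0 a_def b_def power_mult[symmetric] eval_nat_numeral)
  have n2: "(2::nat) \<ge> 1" by simp
  have ex\<psi>: "(\<lambda>v. (1 + a* v^2 + b* v^4) - (\<Sum>l\<le>2. aM l * v^(2*l))) \<in> o[R0](\<lambda>v::real. v^(2*2))"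
    by (simp add: sum2 zero_small)
  have em: "(\<lambda>v. phi M v - (1 + a* v^2 + b* v^4) - 0 * v^(2*2)) \<in> o[R0](\<lambda>v::real. v^(2*2))"
    using good_exp[OF gM, of 2] by (simp add: sum2)
  define m where "m = phi M"
  have tm: "(m \<longlongrightarrow> 1) R0" unfolding m_def by (rule good_tendsto1[OF gM])
  have om: "(\<lambda>r. m r - 1) \<in> o[R0](\<lambda>r. r)" unfolding m_def by (rule good_o1[OF gM])
  note IC = inner_conds[OF tm om]
  have Em: "(\<lambda>r. m r - (1 + a*r^2 + b*r^4)) \<in> o[R0](\<lambda>r::real. r^(2*2))" using em unfolding m_def by simp
  have hm2: "(\<lambda>r. (1 + a*r^2 + b*r^4) - m r) \<in> O[R0](\<lambda>r::real. r^(2*2))"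
  proof -
    have "(\<lambda>r. - (m r - (1 + a*r^2 + b*r^4))) \<in> o[R0](\<lambda>r::real. r^(2*2))"
      by (rule landau_o.small.uminus_in_iff[THEN iffD2, OF Em])
    then show ?thesis by (intro small_imp_big') simp
  qed
  have z: "(\<lambda>r::real. 0::real) \<in> O[R0](\<lambda>r. r^(2*2))" by (rule small_imp_big'[OF zero_small])
  have zP: "(\<lambda>r::real. (1 - r) - (1 - r)) \<in> O[R0](\<lambda>r. r^(2*2))" using z by simp
  have zQ: "(\<lambda>r::real. (1 + r) - (1 + r)) \<in> O[R0](\<lambda>r. r^(2*2))" using z by simp
  have pos: "\<forall>\<^sub>F r in R0. 0 < r \<and> r < 1 \<and> m r > 0"
    using ev01 order_tendstoD(1)[OF tm zero_less_one] by eventually_elim auto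
  define PP where "PP r = M (1-r) (m r)" for r
  define QQ where "QQ r = M (m r) (1+r)" for r
  note EP0 = D2[where \<phi>="phi M" and \<phi>'="\<lambda>v. 1 + a* v^2 + b* v^4" and \<alpha>=aM and \<delta>=0 and n=2
        and P="\<lambda>r. 1 - r" and Q=m and P'="\<lambda>r. 1 - r" and Q'="\<lambda>r. 1 + a*r^2 + b*r^4",
        OF n2 ex\<psi> a0 em IC(1) IC(2) zP hm2]
  note AP = alg_O[where p="\<lambda>r. 1 - r" and q="\<lambda>r. 1 + a*r^2 + b*r^4" and t="p4 a b" and R="RP a b" and a=a and b=b]
  have AP': "(\<lambda>r. ((1 - r) + (1 + a*r^2 + b*r^4))/2 * (1 + a*(((1 + a*r^2 + b*r^4) - (1 - r))/((1 + a*r^2 + b*r^4) + (1 - r)))^2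
       + b*(((1 + a*r^2 + b*r^4) - (1 - r))/((1 + a*r^2 + b*r^4) + (1 - r)))^4) - p4 a b r) \<in> o[R0](\<lambda>r::real. r^(2*2))"
  proof (rule O5_small, rule AP)
    have "((\<lambda>r::real. (1 - r) + (1 + a*r^2 + b*r^4)) \<longlongrightarrow> (1 - 0) + (1 + a*0^2 + b*0^4)) R0"
      by (intro tendsto_intros r_tendsto0)
    then show "((\<lambda>r::real. (1 - r) + (1 + a*r^2 + b*r^4)) \<longlongrightarrow> 2) R0" by simp
    show "\<And>r. ((1 - r) + (1 + a*r^2 + b*r^4))^4 + a*((1 + a*r^2 + b*r^4) - (1 - r))^2*((1 - r) + (1 + a*r^2 + b*r^4))^2
         + b*((1 + a*r^2 + b*r^4) - (1 - r))^4 - 2*((1 - r) + (1 + a*r^2 + b*r^4))^3 * p4 a b r = r^5 * RP a b r"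
      by (rule idP)
    show "isCont (RP a b) 0" unfolding RP_def by (intro continuous_intros)
  qed
  have Em2: "(\<lambda>r. (m r - (1 + a*r^2 + b*r^4))/2) \<in> o[R0](\<lambda>r::real. r^(2*2))"
    using Em by simp
  have PPo: "(\<lambda>r. PP r - p4 a b r) \<in> o[R0](\<lambda>r::real. r^(2*2))"
    apply (rule small_ev_transfer[OF sum_in_smallo(1)[OF sum_in_smallo(1)[OF EP0 AP'] Em2]])
    using pos apply (rule eventually_mono)
    subgoal for r using good_phi[OF gM, of "1 - r" "m r"] unfolding PP_def by simp
    done
  note EQ0 = D2[where \<phi>="phi M" and \<phi>'="\<lambda>v. 1 + a* v^2 + b* v^4" and \<alpha>=aM and \<delta>=0 and n=2
        and P=m and Q="\<lambda>r. 1 + r" and P'="\<lambda>r. 1 + a*r^2 + b*r^4" and Q'="\<lambda>r. 1 + r",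
        OF n2 ex\<psi> a0 em IC(3) IC(4) hm2 zQ]
  note AQ = alg_O[where q="\<lambda>r. 1 + r" and p="\<lambda>r. 1 + a*r^2 + b*r^4" and t="p4n a b" and R="RQ a b" and a=a and b=b]
  have AQ': "(\<lambda>r. ((1 + a*r^2 + b*r^4) + (1 + r))/2 * (1 + a*(((1 + r) - (1 + a*r^2 + b*r^4))/((1 + r) + (1 + a*r^2 + b*r^4)))^2
       + b*(((1 + r) - (1 + a*r^2 + b*r^4))/((1 + r) + (1 + a*r^2 + b*r^4)))^4) - p4n a b r) \<in> o[R0](\<lambda>r::real. r^(2*2))"
  proof (rule O5_small, rule AQ)
    have "((\<lambda>r::real. (1 + a*r^2 + b*r^4) + (1 + r)) \<longlongrightarrow> (1 + a*0^2 + b*0^4) + (1 + 0)) R0"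
      by (intro tendsto_intros r_tendsto0)
    then show "((\<lambda>r::real. (1 + a*r^2 + b*r^4) + (1 + r)) \<longlongrightarrow> 2) R0" by simp
    show "\<And>r. ((1 + a*r^2 + b*r^4) + (1 + r))^4 + a*((1 + r) - (1 + a*r^2 + b*r^4))^2*((1 + a*r^2 + b*r^4) + (1 + r))^2
         + b*((1 + r) - (1 + a*r^2 + b*r^4))^4 - 2*((1 + a*r^2 + b*r^4) + (1 + r))^3 * p4n a b r = r^5 * RQ a b r"
      by (rule idQ)
    show "isCont (RQ a b) 0" unfolding RQ_def by (intro continuous_intros)
  qed
  have QQo: "(\<lambda>r. QQ r - p4n a b r) \<in> o[R0](\<lambda>r::real. r^(2*2))"
    apply (rule small_ev_transfer[OF sum_in_smallo(1)[OF sum_in_smallo(1)[OF EQ0 AQ'] Em2]])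
    using pos apply (rule eventually_mono)
    subgoal for r using good_phi[OF gM, of "m r" "1 + r"] unfolding QQ_def by simp
    done
  have c1: "isCont (p4 a b) 0" unfolding p4_def by (intro continuous_intros)
  have c2: "isCont (p4n a b) 0" unfolding p4n_def by (intro continuous_intros)
  have t1: "(p4 a b \<longlongrightarrow> 1) R0" by (rule isCont_tendsto_R0[OF c1]) (simp add: p4_def)
  have t2: "(p4n a b \<longlongrightarrow> 1) R0" by (rule isCont_tendsto_R0[OF c2]) (simp add: p4n_def)
  have cp: "((\<lambda>r. (p4 a b r + p4n a b r)/2) \<longlongrightarrow> 1) R0"
    using tendsto_divide[OF tendsto_add[OF t1 t2] tendsto_const[of 2]] by simp
  have dp_eq: "\<And>r. p4n a b r - p4 a b r = r * (1 - (a/4 + a^2) * r^2)"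
    unfolding p4_def p4n_def by algebra
  have dp: "((\<lambda>r. (p4n a b r - p4 a b r)/r) \<longlongrightarrow> 1) R0"
  proof (rule tendsto_ev_eq)
    show "((\<lambda>r. 1 - (a/4 + a^2) * r^2) \<longlongrightarrow> 1 - (a/4 + a^2) * 0^2) R0"
      by (intro tendsto_intros r_tendsto0)
    show "\<forall>\<^sub>F r in R0. 1 - (a/4 + a^2) * r^2 = (p4n a b r - p4 a b r)/r"
      using ev_pos by eventually_elim (simp add: dp_eq)
  qed simp
  have dPP: "(\<lambda>r. PP r - p4 a b r) \<in> O[R0](\<lambda>r::real. r^(2*2))" by (rule small_imp_big'[OF PPo])
  have dQQ: "(\<lambda>r. QQ r - p4n a b r) \<in> O[R0](\<lambda>r::real. r^(2*2))" by (rule small_imp_big'[OF QQo])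
  note oc = wlemma2[OF n2 cp dp dPP dQQ]
  have dPP2: "(\<lambda>r. p4 a b r - PP r) \<in> O[R0](\<lambda>r::real. r^(2*2))"
    using landau_o.big.uminus_in_iff[THEN iffD2, OF dPP] by simp
  have dQQ2: "(\<lambda>r. p4n a b r - QQ r) \<in> O[R0](\<lambda>r::real. r^(2*2))"
    using landau_o.big.uminus_in_iff[THEN iffD2, OF dQQ] by simp
  note EO = D2[where \<phi>="phi M" and \<phi>'="\<lambda>v. 1 + a* v^2 + b* v^4" and \<alpha>=aM and \<delta>=0 and n=2
        and P=PP and Q=QQ and P'="p4 a b" and Q'="p4n a b",
        OF n2 ex\<psi> a0 em oc(1) oc(2) dPP2 dQQ2]
  note AO = alg_O[where p="p4 a b" and q="p4n a b" and t="\<lambda>r. 1 + a*r^2 + bp a b * r^4" and R="RO a b" and a=a and b=b]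
  have AO': "(\<lambda>r. (p4 a b r + p4n a b r)/2 * (1 + a*((p4n a b r - p4 a b r)/(p4n a b r + p4 a b r))^2
       + b*((p4n a b r - p4 a b r)/(p4n a b r + p4 a b r))^4) - (1 + a*r^2 + bp a b * r^4)) \<in> o[R0](\<lambda>r::real. r^(2*2))"
  proof (rule O5_small, rule AO)
    show "((\<lambda>r::real. p4 a b r + p4n a b r) \<longlongrightarrow> 2) R0"
      using tendsto_add[OF t1 t2] by simp
    show "\<And>r. (p4 a b r + p4n a b r)^4 + a*(p4n a b r - p4 a b r)^2*(p4 a b r + p4n a b r)^2
         + b*(p4n a b r - p4 a b r)^4 - 2*(p4 a b r + p4n a b r)^3 * (1 + a*r^2 + bp a b * r^4) = r^5 * RO a b r"
      by (rule idO)
    show "isCont (RO a b) 0" unfolding RO_def by (intro continuous_intros)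
  qed
  have PQo: "(\<lambda>r. ((PP r - p4 a b r) + (QQ r - p4n a b r))/2) \<in> o[R0](\<lambda>r::real. r^(2*2))"
    using sum_in_smallo(1)[OF PPo QQo] by simp
  have posO: "\<forall>\<^sub>F r in R0. PP r > 0 \<and> QQ r > 0" by (rule wlemma(4)[OF oc])
  have fin: "(\<lambda>r. phi M r - (1 + a*r^2 + bp a b * r^4)) \<in> o[R0](\<lambda>r::real. r^(2*2))"
    apply (rule small_ev_transfer[OF sum_in_smallo(1)[OF sum_in_smallo(1)[OF EO AO'] PQo]])
    using eventually_conj[OF posO TMMM[OF st]] apply (rule eventually_mono)
    subgoal for r using good_phi[OF gM, of "PP r" "QQ r"] unfolding T_def PP_def QQ_def m_def phi_def
      by (simp add: field_simps)
    done
  have "(\<lambda>r. (phi M r - (1 + a*r^2 + b*r^4) - 0 * r^(2*2)) - (phi M r - (1 + a*r^2 + bp a b * r^4))) \<in> o[R0](\<lambda>r::real. r^(2*2))"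
    by (rule sum_in_smallo(2)[OF em fin])
  then have "(\<lambda>r. (bp a b - b) * r^(2*2)) \<in> o[R0](\<lambda>r::real. r^(2*2))"
    by (simp add: algebra_simps)
  then have "bp a b - b = 0" by (rule coef_zero)
  then have "b = 1/6 * a * (1 + a) * (1 - 4 * a)" unfolding bp_def by (simp add: field_simps) algebra
  then show ?thesis unfolding a_def b_def .
qed


theorem mainTheorem9:
  fixes K M N :: "real \<Rightarrow> real \<Rightarrow> real" and aK aM aN :: "nat \<Rightarrow> real"
  assumes "is_mean K" "symmetric_mean K" "homogeneous_mean K" "stable_mean K"
      and "is_mean M" "symmetric_mean M" "homogeneous_mean M" "stable_mean M"
      and "is_mean N" "symmetric_mean N" "homogeneous_mean N"
      and "sym_asymp_expansion K aK" "sym_asymp_expansion M aM" "sym_asymp_expansion N aN"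
      and "stabilizable K M N" "stabilizable M K N"
  shows "(\<forall>n. aK n = aM n) \<and> aN 1 = aM 1 \<and> aM 1 = aK 1 \<and>
         aN 2 = 1/6 * aN 1 * (1 + aN 1) * (1 - 4 * aN 1)"
proof -
  have gK: "good K aK" unfolding good_def using assms by blast
  have gM: "good M aM" unfolding good_def using assms by blast
  have gN: "good N aN" unfolding good_def using assms by blast
  have KM: "\<And>n. aK n = aM n" by (rule KM_eq[OF gK gM gN assms(15) assms(16)])
  have NM: "\<And>n. aN n = aM n" by (rule NM_eq[OF gK gM gN assms(15) assms(8) KM])
  have a2: "aM 2 = 1/6 * aM 1 * (1 + aM 1) * (1 - 4 * aM 1)" by (rule stable_a2[OF gM assms(8)])
  show ?thesis using KM NM a2 by simp
qed

end
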